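(* Let $d$ be an even positive integer and $s$ a positive integer with $2s\leqslant d$. For every $\varepsilon\in I^s$, $\overline{B_\varepsilon}=B_{\bar\varepsilon}$.
   Context: Let $I=\{0,1\}$. For $x\in I^n$, its antipode is $\bar x=(1-x_1,\ldots,1-x_n)$, and for $A\subseteq I^n$, $\bar A=\{\bar x\colon x\in A\}$; $|x|=\sum_i x_i$. Let $\alpha=(0,\ldots,0)$, $\omega=(1,\ldots,1)\in I^s$. For $\varepsilon\in I^s\setminus\{\alpha,\omega\}$ let $i=t(\varepsilon)$ be the unique index with $\varepsilon_i\neq\varepsilon_{i+1}=\cdots=\varepsilon_s$, and $A_\varepsilon=\{\varepsilon_1\}\times\cdots\times\{\varepsilon_i\}\times I^{s-1-i}\subseteq I^{s-1}$. Define subsets of $I^{d-s}$: $X_0=\{x\colon |x|\leqslant \frac d2-s\}$; $X_k=\{x\colon |x|=\frac d2-s+k\}$ for $0<k<s$; $X_s=\{x\colon |x|\geqslant \frac d2\}$. For $\varepsilon\in I^s\setminus\{\alpha,\omega\}$ set $B_\varepsilon=X_{|\varepsilon|}\cap(I^{d-2s+1}\times A_\varepsilon)$ (where $I^{d-s}=I^{d-2s+1}\times I^{s-1}$), and set $B_\alpha=X_0$, $B_\omega=X_s$. *)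

theory Defs
  imports Main
begin

text \<open>Points of I^n are lists of length n with entries in {0,1} (entry i of the list is
  coordinate i+1).\<close>
definition cube :: "nat \<Rightarrow> nat list set" where
  "cube n = {x. length x = n \<and> set x \<subseteq> {0, 1}}"

definition antipode :: "nat list \<Rightarrow> nat list" where
  "antipode x = map (\<lambda>a. 1 - a) x"

definition antipode_set :: "nat list set \<Rightarrow> nat list set" where
  "antipode_set A = antipode ` A"

definition wt :: "nat list \<Rightarrow> nat" where
  "wt x = sum_list x"

definition alpha :: "nat \<Rightarrow> nat list" where
  "alpha s = replicate s 0"

definition omega :: "nat \<Rightarrow> nat list" where
  "omega s = replicate s 1"

text \<open>t(eps): the unique (1-based) index i with eps_i \<noteq> eps_(i+1) = ... = eps_s.\<close>
definition tidx :: "nat list \<Rightarrow> nat" where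
  "tidx e = (THE i. 1 \<le> i \<and> i < length e \<and> e ! (i - 1) \<noteq> e ! i \<and>
                    (\<forall>j. i \<le> j \<and> j < length e \<longrightarrow> e ! j = e ! i))"

text \<open>A_eps = {eps_1} x ... x {eps_i} x I^(s-1-i), a subset of I^(s-1), where i = t(eps).\<close>
definition Aeps :: "nat list \<Rightarrow> nat list set" where
  "Aeps e = {y \<in> cube (length e - 1). take (tidx e) y = take (tidx e) e}"

definition Xset :: "nat \<Rightarrow> nat \<Rightarrow> nat \<Rightarrow> nat list set" where
  "Xset d s k = {x \<in> cube (d - s).
      (if k = 0 then wt x \<le> d div 2 - s
       else if k < s then wt x = d div 2 - s + k
       else wt x \<ge> d div 2)}"

text \<open>B_eps, using I^(d-s) = I^(d-2s+1) x I^(s-1).\<close>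
definition Bset :: "nat \<Rightarrow> nat \<Rightarrow> nat list \<Rightarrow> nat list set" where
  "Bset d s e =
     (if e = alpha s then Xset d s 0
      else if e = omega s then Xset d s s
      else {x \<in> Xset d s (wt e). drop (d - 2 * s + 1) x \<in> Aeps e})"

end

theory Submission
  imports Defs
begin

lemma cube_Cons: "(a # x \<in> cube (Suc n)) = (a \<in> {0,1} \<and> x \<in> cube n)"
  by (auto simp: cube_def)

lemma antipode_cube: "x \<in> cube n \<Longrightarrow> antipode x \<in> cube n"
  by (auto simp: cube_def antipode_def)

lemma antipode_antipode: "x \<in> cube n \<Longrightarrow> antipode (antipode x) = x"
  unfolding cube_def antipode_def
  by (induction x arbitrary: n) auto

lemma wt_le: "set x \<subseteq> {0,1} \<Longrightarrow> wt x \<le> length x"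
  unfolding wt_def by (induction x) auto

lemma wt_antipode_aux: "set x \<subseteq> {0,1} \<Longrightarrow> wt (antipode x) + wt x = length x"
  unfolding wt_def antipode_def by (induction x) auto

lemma wt_antipode: "x \<in> cube n \<Longrightarrow> wt (antipode x) = n - wt x"
  using wt_antipode_aux[of x] by (auto simp: cube_def)

lemma wt_cube_le: "x \<in> cube n \<Longrightarrow> wt x \<le> n"
  using wt_le[of x] by (auto simp: cube_def)

lemma wt0: "set x \<subseteq> {0,1} \<Longrightarrow> wt x = 0 \<Longrightarrow> x = replicate (length x) 0"
  unfolding wt_def by (induction x) auto

lemma wtfull: "set x \<subseteq> {0,1} \<Longrightarrow> wt x = length x \<Longrightarrow> x = replicate (length x) 1"
proof (induction x)
  case (Cons a x)
  have "wt x \<le> length x" using Cons wt_le by auto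
  with Cons show ?case by (auto simp: wt_def)
qed simp

lemma antipode_alpha: "antipode (alpha s) = omega s"
  by (simp add: antipode_def alpha_def omega_def)
lemma antipode_omega: "antipode (omega s) = alpha s"
  by (simp add: antipode_def alpha_def omega_def)

lemma tidx_antipode:
  assumes "e \<in> cube s" shows "tidx (antipode e) = tidx e"
proof -
  have eq: "\<And>i j. i < length e \<Longrightarrow> j < length e \<Longrightarrow>
      (antipode e ! i = antipode e ! j) = (e ! i = e ! j)"
  proof -
    fix i j assume "i < length e" "j < length e"
    then have "e ! i \<in> {0,1}" "e ! j \<in> {0,1}" using assms
      by (auto simp: cube_def dest!: nth_mem)
    then show "(antipode e ! i = antipode e ! j) = (e ! i = e ! j)"
      using \<open>i < length e\<close> \<open>j < length e\<close> by (auto simp: antipode_def)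
  qed
  have "\<And>i. (1 \<le> i \<and> i < length (antipode e) \<and> antipode e ! (i - 1) \<noteq> antipode e ! i \<and>
                    (\<forall>j. i \<le> j \<and> j < length (antipode e) \<longrightarrow> antipode e ! j = antipode e ! i))
     = (1 \<le> i \<and> i < length e \<and> e ! (i - 1) \<noteq> e ! i \<and>
                    (\<forall>j. i \<le> j \<and> j < length e \<longrightarrow> e ! j = e ! i))"
  proof -
    fix i
    have L: "length (antipode e) = length e" by (simp add: antipode_def)
    show "?thesis i"
    proof (cases "1 \<le> i \<and> i < length e")
      case True
      then have "(antipode e ! (i - 1) = antipode e ! i) = (e ! (i - 1) = e ! i)"
        by (intro eq) auto
      moreover have "(\<forall>j. i \<le> j \<and> j < length e \<longrightarrow> antipode e ! j = antipode e ! i)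
          = (\<forall>j. i \<le> j \<and> j < length e \<longrightarrow> e ! j = e ! i)"
        using True eq by auto
      ultimately show ?thesis unfolding L by simp
    next
      case False
      then show ?thesis unfolding L by auto
    qed
  qed
  then show ?thesis unfolding tidx_def by simp
qed

lemma take_antipode: "take k (antipode x) = antipode (take k x)"
  by (simp add: antipode_def take_map)
lemma drop_antipode: "drop k (antipode x) = antipode (drop k x)"
  by (simp add: antipode_def drop_map)

lemma antipode_inj: "x \<in> cube n \<Longrightarrow> y \<in> cube m \<Longrightarrow> antipode x = antipode y \<Longrightarrow> x = y"
  by (metis antipode_antipode)

lemma take_cube: "x \<in> cube n \<Longrightarrow> take k x \<in> cube (min k n)"
  by (auto simp: cube_def dest: in_set_takeD)
lemma drop_cube: "x \<in> cube n \<Longrightarrow> drop k x \<in> cube (n - k)"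
  by (auto simp: cube_def dest: in_set_dropD)

lemma Aeps_antipode:
  assumes e: "e \<in> cube s" and y: "y \<in> cube m"
  shows "(antipode y \<in> Aeps (antipode e)) = (y \<in> Aeps e)"
proof -
  have L: "length (antipode e) = length e" by (simp add: antipode_def)
  have "antipode y \<in> cube (length e - 1) \<longleftrightarrow> y \<in> cube (length e - 1)"
    using y by (auto simp: cube_def antipode_def)
  moreover have "(take (tidx e) (antipode y) = take (tidx e) (antipode e)) =
      (take (tidx e) y = take (tidx e) e)"
    unfolding take_antipode
    using antipode_inj[OF take_cube[OF y] take_cube[OF e]] by metis
  ultimately show ?thesis
    unfolding Aeps_def tidx_antipode[OF e] L by simp
qed

lemma Bset_cube: "Bset d s e \<subseteq> cube (d - s)"
  by (auto simp: Bset_def Xset_def)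

lemma antipode_set_char:
  assumes "A \<subseteq> cube n" "B \<subseteq> cube n" "\<And>x. x \<in> cube n \<Longrightarrow> (x \<in> B) = (antipode x \<in> A)"
  shows "antipode_set A = B"
  unfolding antipode_set_def
proof
  show "antipode ` A \<subseteq> B"
    using assms by (auto simp: antipode_antipode antipode_cube subset_iff)
  show "B \<subseteq> antipode ` A"
  proof
    fix x assume "x \<in> B"
    then have "x \<in> cube n" "antipode x \<in> A" using assms by auto
    then show "x \<in> antipode ` A" by (metis antipode_antipode image_eqI)
  qed
qed

theorem lemma3:
  fixes d s :: nat and e :: "nat list"
  assumes "even d" and "0 < d" and "0 < s" and "2 * s \<le> d"
    and "e \<in> cube s"
  shows "antipode_set (Bset d s e) = Bset d s (antipode e)"
proof (rule antipode_set_char[OF Bset_cube Bset_cube])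
  fix x assume x: "x \<in> cube (d - s)"
  have ax: "antipode x \<in> cube (d - s)" using antipode_cube[OF x] .
  have wx: "wt (antipode x) = d - s - wt x" using wt_antipode[OF x] .
  have wxle: "wt x \<le> d - s" using wt_cube_le[OF x] .
  have ae: "antipode e \<in> cube s" using antipode_cube[OF assms(5)] .
  have we: "wt (antipode e) = s - wt e" using wt_antipode[OF assms(5)] .
  have wele: "wt e \<le> s" using wt_cube_le[OF assms(5)] .
  have ao: "alpha s \<noteq> omega s" using assms(3)
    by (simp add: alpha_def omega_def)
  have "d = 2 * (d div 2)" using assms(1) by auto
  show "(x \<in> Bset d s (antipode e)) = (antipode x \<in> Bset d s e)"
  proof (cases "e = alpha s")
    case True
    then have "antipode e = omega s" by (simp add: antipode_alpha)
    then show ?thesis using True ao x ax wx wxle assms \<open>d = 2 * (d div 2)\<close>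
      by (auto simp: Bset_def Xset_def)
  next
    case na: False
    show ?thesis
    proof (cases "e = omega s")
      case True
      then have "antipode e = alpha s" by (simp add: antipode_omega)
      then show ?thesis using True ao x ax wx wxle assms \<open>d = 2 * (d div 2)\<close>
        by (auto simp: Bset_def Xset_def)
    next
      case no: False
      have e1: "wt e \<noteq> 0" using wt0[of e] na assms(5) by (auto simp: cube_def alpha_def)
      have e2: "wt e \<noteq> s" using wtfull[of e] no assms(5) by (auto simp: cube_def omega_def)
      have na': "antipode e \<noteq> alpha s"
        using no antipode_antipode[OF assms(5)] antipode_alpha[of s] by metis
      have no': "antipode e \<noteq> omega s"
        using na antipode_antipode[OF assms(5)] antipode_omega[of s] by metis
      have dr: "drop (d - 2 * s + 1) (antipode x) = antipode (drop (d - 2 * s + 1) x)"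
        by (rule drop_antipode)
      have "(drop (d - 2 * s + 1) x \<in> Aeps (antipode e)) =
            (drop (d - 2 * s + 1) (antipode x) \<in> Aeps e)"
        unfolding dr
        using Aeps_antipode[OF assms(5) antipode_cube[OF drop_cube[OF x]]]
          antipode_antipode[OF assms(5)] antipode_antipode[OF drop_cube[OF x]] by simp
      then show ?thesis using na no na' no' e1 e2 we wele x ax wx wxle assms \<open>d = 2 * (d div 2)\<close>
        by (auto simp: Bset_def Xset_def)
    qed
  qed
qed

end
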